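(* Let $n\geq 3$, $x_n=2\cos(\pi/n)$, and let $c$ be a real number with $c\leq 1$ and $c\leq x_n^2-2$. Then there is a real $y_c$ with $y_c\geq 2$ and $y_c\geq x_n^2-1$ such that $\lambda(x_n,y_c)=c$ and $\alpha(x_n,y_c)<0$.
   Context: $\lambda(x,y)=9x^2-12x^4+4x^6-5y+10x^2y+2x^4y-4x^6y-11x^2y^2+8x^4y^2+x^6y^2+5y^3-4x^2y^3-3x^4y^3+3x^2y^4-y^5$ and $\alpha(x,y)=1-4x^2+2x^4+2y-x^2y-x^4y-y^2+2x^2y^2-y^3$. *)

theory Defs
  imports Complex_Main
begin

definition lam :: "real \<Rightarrow> real \<Rightarrow> real" where
  "lam x y = 9*x^2 - 12*x^4 + 4*x^6 - 5*y + 10*x^2*y + 2*x^4*y - 4*x^6*y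
     - 11*x^2*y^2 + 8*x^4*y^2 + x^6*y^2 + 5*y^3 - 4*x^2*y^3 - 3*x^4*y^3
     + 3*x^2*y^4 - y^5"

definition alpha :: "real \<Rightarrow> real \<Rightarrow> real" where
  "alpha x y = 1 - 4*x^2 + 2*x^4 + 2*y - x^2*y - x^4*y - y^2 + 2*x^2*y^2 - y^3"

end

theory Submission
  imports Defs "HOL-Real_Asymp.Real_Asymp"
begin

definition L :: "real \<Rightarrow> real \<Rightarrow> real" where
  "L t y = 9*t - 12*t^2 + 4*t^3 - 5*y + 10*t*y + 2*t^2*y - 4*t^3*y
     - 11*t*y^2 + 8*t^2*y^2 + t^3*y^2 + 5*y^3 - 4*t*y^3 - 3*t^2*y^3
     + 3*t*y^4 - y^5"

definition A :: "real \<Rightarrow> real \<Rightarrow> real" where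
  "A t y = 1 - 4*t + 2*t^2 + 2*y - t*y - t^2*y - y^2 + 2*t*y^2 - y^3"

lemma pw: "(x::real)^4 = (x^2)^2" "x^6 = (x^2)^3" by (simp_all add: power_mult[symmetric])

lemma lamL: "lam x y = L (x^2) y"
  unfolding lam_def L_def pw by simp

lemma alphaA: "alpha x y = A (x^2) y"
  unfolding alpha_def A_def pw by simp

lemma L_2: "L t 2 = t - 2"
  unfolding L_def by algebra

lemma L_t1: "L t (t - 1) = 1"
  unfolding L_def by algebra

lemma A_neg1:
  fixes t y :: real
  assumes "t \<le> 3" "y \<ge> 2"
  shows "A t y < 0"
proof -
  define s where "s = y - 2"
  have s0: "s \<ge> 0" using assms s_def by simp
  have e: "A t y = (2*t-7)*s^2 - s^3 - (t^2-7*t+14)*s + (2*t-7)"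
    unfolding A_def s_def by algebra
  have a: "s^3 \<ge> 0" using s0 by simp
  have b: "(2*t-7)*s^2 \<le> 0" using assms by (intro mult_nonpos_nonneg) auto
  have q: "t^2-7*t+14 > 0"
  proof -
    have "t^2-7*t+14 = (t-7/2)^2 + 7/4" by algebra
    then show ?thesis using zero_le_power2[of "t-7/2"] by linarith
  qed
  have c: "(t^2-7*t+14)*s \<ge> 0" using q s0 by simp
  show ?thesis using e a b c assms by linarith
qed

lemma A_neg2:
  fixes t y :: real
  assumes "t \<ge> 3" "y \<ge> t - 1"
  shows "A t y < 0"
proof -
  define s where "s = y - (t - 1)"
  have s0: "s \<ge> 0" using assms s_def by simp
  have e: "A t y = (2 - t)*s^2 - s^3 + (1 - t)*s - 1"
    unfolding A_def s_def by algebra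
  have a: "s^3 \<ge> 0" using s0 by simp
  have b: "(2-t)*s^2 \<le> 0" using assms by (intro mult_nonpos_nonneg) auto
  have c: "(1-t)*s \<le> 0" using assms s0 by (intro mult_nonpos_nonneg) auto
  show ?thesis using e a b c by linarith
qed

lemma L_lim: "filterlim (\<lambda>y. L t y) at_bot at_top"
  unfolding L_def by real_asymp

lemma L_cont: "isCont (\<lambda>y. L t y) y"
  unfolding L_def by (intro continuous_intros)

lemma main:
  fixes t c :: real
  assumes "c \<le> 1" "c \<le> t - 2"
  shows "\<exists>y. y \<ge> 2 \<and> y \<ge> t - 1 \<and> L t y = c \<and> A t y < 0"
proof -
  define y0 where "y0 = max 2 (t - 1)"
  have l0: "c \<le> L t y0"
    using assms L_2[of t] L_t1[of t] unfolding y0_def by (auto simp: max_def)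
  have "\<forall>\<^sub>F y in at_top. L t y \<le> c"
    using L_lim[of t] by (simp add: filterlim_at_bot)
  then obtain Y where Y: "\<And>y. y \<ge> Y \<Longrightarrow> L t y \<le> c"
    by (auto simp: eventually_at_top_linorder)
  define Y' where "Y' = max Y y0"
  have "L t Y' \<le> c" using Y Y'_def by simp
  then obtain y where y: "y \<ge> y0" "y \<le> Y'" "L t y = c"
    using IVT2[of "\<lambda>y. L t y" Y' c y0] l0 L_cont Y'_def by auto
  have "A t y < 0"
  proof (cases "t \<le> 3")
    case True then show ?thesis using A_neg1 y y0_def by auto
  next
    case False then show ?thesis using A_neg2 y y0_def by auto
  qed
  then show ?thesis using y y0_def by auto
qed

theorem proposition6p9:
  fixes n :: nat and c :: real
  assumes "n \<ge> 3"
    and "c \<le> 1"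
    and "c \<le> (2 * cos (pi / real n))^2 - 2"
  shows "\<exists>y::real. y \<ge> 2 \<and> y \<ge> (2 * cos (pi / real n))^2 - 1
           \<and> lam (2 * cos (pi / real n)) y = c \<and> alpha (2 * cos (pi / real n)) y < 0"
  using main[OF assms(2,3)] unfolding lamL alphaA by blast

end
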